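(* Let $\mathcal G=(I,O,\lambda)$ be a synchronous game and let $t\in\{loc,q,qa,qc,vect\}$. Then $p(a,b|v,w)$ is a perfect t-strategy for $\mathcal G$ if and only if $p(a,b|v,w)$ is a perfect t-strategy for $\mathcal G_s$.
   Context: A synchronous game $\mathcal G=(I,O,\lambda)$ consists of finite sets $I,O$ and $\lambda:I\times I\times O\times O\to\{0,1\}$ with $\lambda(v,v,a,b)=1$ if $a=b$ and $0$ if $a\ne b$. $\mathcal G_s=(I,O,\lambda_s)$ where $\lambda_s(v,w,a,b)=\lambda(v,w,a,b)\lambda(w,v,b,a)$. A strategy is a conditional probability density $p(a,b|v,w)$; it is perfect for a game with rule $\lambda$ if $\lambda(v,w,a,b)=0\Rightarrow p(a,b|v,w)=0$. The classes: loc = densities $p(a,b|v,w)=P(f_v=a,g_w=b)$ for random variables $f_v,g_w$ on a common probability space; q = densities $\langle(E_{v,a}\otimes F_{w,b})\psi,\psi\rangle$ with finite-dimensional Hilbert spaces, a unit vector $\psi$, and projection-valued measures $\{E_{v,a}\}_a$, $\{F_{w,b}\}_b$ (orthogonal projections summing to $I$); qa = closure of the set of q-densities; qc = densities $\langle E_{v,a}F_{w,b}\psi,\psi\rangle$ on a single Hilbert space with projection-valued measures satisfying $E_{v,a}F_{w,b}=F_{w,b}E_{v,a}$; vect = densities $\langle h_{v,a},k_{w,b}\rangle$ where for each $v$ the $h_{v,a}$ ($a\in O$) are mutually orthogonal, likewise the $k_{v,b}$, there is a unit vector $\eta$ with $\sum_ah_{v,a}=\eta=\sum_bk_{w,b}$,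 and all $\langle h_{v,a},k_{w,b}\rangle\ge0$. *)

theory Defs
  imports "HOL-Analysis.Analysis" "HOL-Probability.Probability"
begin

text \<open>A game on finite question set 'i and finite answer set 'o is a rule
  lam v w a b (true = 1, false = 0).  Strategies are densities p a b v w = p(a,b|v,w).\<close>

definition synchronous_game :: "('i::finite \<Rightarrow> 'i \<Rightarrow> 'o::finite \<Rightarrow> 'o \<Rightarrow> bool) \<Rightarrow> bool" where
  "synchronous_game lam \<longleftrightarrow> (\<forall>v a b. lam v v a b \<longleftrightarrow> a = b)"

definition sym_rule :: "('i \<Rightarrow> 'i \<Rightarrow> 'o \<Rightarrow> 'o \<Rightarrow> bool) \<Rightarrow> ('i \<Rightarrow> 'i \<Rightarrow> 'o \<Rightarrow> 'o \<Rightarrow> bool)" where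
  "sym_rule lam = (\<lambda>v w a b. lam v w a b \<and> lam w v b a)"

definition perfect :: "('i \<Rightarrow> 'i \<Rightarrow> 'o \<Rightarrow> 'o \<Rightarrow> bool) \<Rightarrow> ('o \<Rightarrow> 'o \<Rightarrow> 'i \<Rightarrow> 'i \<Rightarrow> real) \<Rightarrow> bool" where
  "perfect lam p \<longleftrightarrow> (\<forall>v w a b. \<not> lam v w a b \<longrightarrow> p a b v w = 0)"

text \<open>A complex Hilbert space is represented as a real Hilbert space (type of class
  real_inner + complete_space, real inner product = Re of the complex one) together with
  a complex structure J (multiplication by i).\<close>

definition complex_structure :: "('h::real_inner \<Rightarrow> 'h) \<Rightarrow> bool" where
  "complex_structure J \<longleftrightarrow> linear J \<and> (\<forall>x. J (J x) = - x) \<and> (\<forall>x y. inner (J x) (J y) = inner x y)"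

definition cinner :: "('h::real_inner \<Rightarrow> 'h) \<Rightarrow> 'h \<Rightarrow> 'h \<Rightarrow> complex" where
  "cinner J x y = Complex (inner x y) (inner x (J y))"

definition is_projection :: "('h::real_inner \<Rightarrow> 'h) \<Rightarrow> ('h \<Rightarrow> 'h) \<Rightarrow> bool" where
  "is_projection J P \<longleftrightarrow> bounded_linear P \<and> (\<forall>x. P (J x) = J (P x)) \<and> (\<forall>x. P (P x) = P x)
      \<and> (\<forall>x y. inner (P x) y = inner x (P y))"

definition is_pvm :: "('h::real_inner \<Rightarrow> 'h) \<Rightarrow> ('o::finite \<Rightarrow> 'h \<Rightarrow> 'h) \<Rightarrow> bool" where
  "is_pvm J E \<longleftrightarrow> (\<forall>a. is_projection J (E a)) \<and> (\<forall>x. (\<Sum>a\<in>UNIV. E a x) = x)"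

text \<open>An n x n complex matrix is a function nat \<Rightarrow> nat \<Rightarrow> complex, only entries with
  indices < n matter.  Vectors of C^n \<otimes> C^m are functions on index pairs.\<close>

definition mat_projection :: "nat \<Rightarrow> (nat \<Rightarrow> nat \<Rightarrow> complex) \<Rightarrow> bool" where
  "mat_projection n P \<longleftrightarrow> (\<forall>i<n. \<forall>j<n. cnj (P j i) = P i j)
      \<and> (\<forall>i<n. \<forall>j<n. (\<Sum>k<n. P i k * P k j) = P i j)"

definition mat_pvm :: "nat \<Rightarrow> ('o::finite \<Rightarrow> nat \<Rightarrow> nat \<Rightarrow> complex) \<Rightarrow> bool" where
  "mat_pvm n E \<longleftrightarrow> (\<forall>a. mat_projection n (E a))
      \<and> (\<forall>i<n. \<forall>j<n. (\<Sum>a\<in>UNIV. E a i j) = (if i = j then 1 else 0))"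

definition tensor_expect :: "nat \<Rightarrow> nat \<Rightarrow> (nat \<Rightarrow> nat \<Rightarrow> complex) \<Rightarrow> (nat \<Rightarrow> nat \<Rightarrow> complex)
    \<Rightarrow> (nat \<times> nat \<Rightarrow> complex) \<Rightarrow> complex" where
  "tensor_expect n m A B psi =
     (\<Sum>i<n. \<Sum>j<m. (\<Sum>i'<n. \<Sum>j'<m. A i i' * B j j' * psi (i', j')) * cnj (psi (i, j)))"

definition loc_strategy :: "'m itself \<Rightarrow> ('o::finite \<Rightarrow> 'o \<Rightarrow> 'i::finite \<Rightarrow> 'i \<Rightarrow> real) \<Rightarrow> bool" where
  "loc_strategy (_ :: 'm itself) p \<longleftrightarrow>
     (\<exists>(M :: 'm measure) (f :: 'i \<Rightarrow> 'm \<Rightarrow> 'o) (g :: 'i \<Rightarrow> 'm \<Rightarrow> 'o).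
        prob_space M \<and>
        (\<forall>v. f v \<in> measurable M (count_space UNIV)) \<and>
        (\<forall>w. g w \<in> measurable M (count_space UNIV)) \<and>
        (\<forall>a b v w. p a b v w = measure M {x \<in> space M. f v x = a \<and> g w x = b}))"

definition q_strategy :: "('o::finite \<Rightarrow> 'o \<Rightarrow> 'i::finite \<Rightarrow> 'i \<Rightarrow> real) \<Rightarrow> bool" where
  "q_strategy p \<longleftrightarrow>
     (\<exists>(n::nat) (m::nat) (E :: 'i \<Rightarrow> 'o \<Rightarrow> nat \<Rightarrow> nat \<Rightarrow> complex)
        (F :: 'i \<Rightarrow> 'o \<Rightarrow> nat \<Rightarrow> nat \<Rightarrow> complex) (psi :: nat \<times> nat \<Rightarrow> complex).
        (\<Sum>i<n. \<Sum>j<m. (cmod (psi (i, j)))\<^sup>2) = 1 \<and>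
        (\<forall>v. mat_pvm n (E v)) \<and> (\<forall>w. mat_pvm m (F w)) \<and>
        (\<forall>a b v w. complex_of_real (p a b v w) = tensor_expect n m (E v a) (F w b) psi))"

definition qa_strategy :: "('o::finite \<Rightarrow> 'o \<Rightarrow> 'i::finite \<Rightarrow> 'i \<Rightarrow> real) \<Rightarrow> bool" where
  "qa_strategy p \<longleftrightarrow> p \<in> closure {p'. q_strategy p'}"

definition qc_strategy :: "'h::{real_inner,complete_space} itself \<Rightarrow>
    ('o::finite \<Rightarrow> 'o \<Rightarrow> 'i::finite \<Rightarrow> 'i \<Rightarrow> real) \<Rightarrow> bool" where
  "qc_strategy (_ :: 'h itself) p \<longleftrightarrow>
     (\<exists>(J :: 'h \<Rightarrow> 'h) (E :: 'i \<Rightarrow> 'o \<Rightarrow> 'h \<Rightarrow> 'h) (F :: 'i \<Rightarrow> 'o \<Rightarrow> 'h \<Rightarrow> 'h) (psi :: 'h).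
        complex_structure J \<and> norm psi = 1 \<and>
        (\<forall>v. is_pvm J (E v)) \<and> (\<forall>w. is_pvm J (F w)) \<and>
        (\<forall>v w a b. E v a \<circ> F w b = F w b \<circ> E v a) \<and>
        (\<forall>a b v w. complex_of_real (p a b v w) = cinner J (E v a (F w b psi)) psi))"

definition vect_strategy :: "'h::{real_inner,complete_space} itself \<Rightarrow>
    ('o::finite \<Rightarrow> 'o \<Rightarrow> 'i::finite \<Rightarrow> 'i \<Rightarrow> real) \<Rightarrow> bool" where
  "vect_strategy (_ :: 'h itself) p \<longleftrightarrow>
     (\<exists>(J :: 'h \<Rightarrow> 'h) (h :: 'i \<Rightarrow> 'o \<Rightarrow> 'h) (k :: 'i \<Rightarrow> 'o \<Rightarrow> 'h) (eta :: 'h).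
        complex_structure J \<and> norm eta = 1 \<and>
        (\<forall>v a a'. a \<noteq> a' \<longrightarrow> cinner J (h v a) (h v a') = 0) \<and>
        (\<forall>w b b'. b \<noteq> b' \<longrightarrow> cinner J (k w b) (k w b') = 0) \<and>
        (\<forall>v. (\<Sum>a\<in>UNIV. h v a) = eta) \<and> (\<forall>w. (\<Sum>b\<in>UNIV. k w b) = eta) \<and>
        (\<forall>v w a b. Im (cinner J (h v a) (k w b)) = 0 \<and> Re (cinner J (h v a) (k w b)) \<ge> 0) \<and>
        (\<forall>a b v w. complex_of_real (p a b v w) = cinner J (h v a) (k w b)))"

datatype strat_class = Loc | Q | QA | QC | Vect

text \<open>p is a t-strategy.  The probability space of loc lives on type 'm and the Hilbert
  space of qc/vect on type 'h; these types are universally quantified in the main theorem.\<close>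
definition t_strategy :: "'m itself \<Rightarrow> 'h::{real_inner,complete_space} itself \<Rightarrow> strat_class \<Rightarrow>
    ('o::finite \<Rightarrow> 'o \<Rightarrow> 'i::finite \<Rightarrow> 'i \<Rightarrow> real) \<Rightarrow> bool" where
  "t_strategy TM TH t p = (case t of
      Loc \<Rightarrow> loc_strategy TM p
    | Q \<Rightarrow> q_strategy p
    | QA \<Rightarrow> qa_strategy p
    | QC \<Rightarrow> qc_strategy TH p
    | Vect \<Rightarrow> vect_strategy TH p)"

end

theory Submission imports Defs begin

lemma quad_cs:
  fixes D c Z :: real
  assumes h: "\<And>t. 0 \<le> D - 2*t*c + t\<^sup>2*Z"
  shows "c\<^sup>2 \<le> D*Z"
proof -
  have D0: "0 \<le> D" using h[of 0] by simp
  show ?thesis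
  proof (cases "Z > 0")
    case True
    have "0 \<le> D - 2*(c/Z)*c + (c/Z)\<^sup>2*Z" by (rule h)
    also have "\<dots> = D - c\<^sup>2/Z" using True by (simp add: power2_eq_square field_simps)
    finally show ?thesis using True by (simp add: field_simps)
  next
    case False
    have c0: "c = 0"
    proof (rule ccontr)
      assume "c \<noteq> 0"
      have "0 \<le> D - 2*((D+1)/(2*c))*c + ((D+1)/(2*c))\<^sup>2*Z" by (rule h)
      moreover have "((D+1)/(2*c))\<^sup>2*Z \<le> 0" using False by (simp add: mult_nonneg_nonpos)
      moreover have "2*((D+1)/(2*c))*c = D+1" using \<open>c \<noteq> 0\<close> by simp
      ultimately show False by linarith
    qed
    have Z0: "Z = 0"
    proof (rule ccontr)
      assume "Z \<noteq> 0"
      then have Zn: "Z < 0" using False by simp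
      define t where "t = sqrt ((D+1)/(-Z))"
      have "t\<^sup>2 = (D+1)/(-Z)" unfolding t_def using D0 Zn by (simp add: divide_nonneg_neg)
      then have "t\<^sup>2 * Z = -(D+1)" using Zn by (simp add: field_simps)
      with h[of t] c0 show False by simp
    qed
    show ?thesis using c0 Z0 by simp
  qed
qed

definition eoff :: "('o::finite \<Rightarrow> 'o \<Rightarrow> 'i \<Rightarrow> 'i \<Rightarrow> real) \<Rightarrow> 'i \<Rightarrow> 'o \<Rightarrow> real" where
  "eoff p v a = (\<Sum>b\<in>UNIV. if b \<noteq> a then p a b v v else 0) + (\<Sum>a'\<in>UNIV. if a' \<noteq> a then p a' a v v else 0)"

definition zmar :: "('o::finite \<Rightarrow> 'o \<Rightarrow> 'i \<Rightarrow> 'i \<Rightarrow> real) \<Rightarrow> 'i \<Rightarrow> 'o \<Rightarrow> real" where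
  "zmar p w b = (\<Sum>a\<in>UNIV. p a b w w)"

definition sbound :: "('o::finite \<Rightarrow> 'o \<Rightarrow> 'i \<Rightarrow> 'i \<Rightarrow> real) \<Rightarrow> 'o \<Rightarrow> 'o \<Rightarrow> 'i \<Rightarrow> 'i \<Rightarrow> bool" where
  "sbound p a b v w \<longleftrightarrow> \<bar>p a b v w - p b a w v\<bar> \<le> sqrt (eoff p v a * zmar p w b) + sqrt (eoff p w b * zmar p v a)"

lemma sum_off:
  fixes f :: "'o::finite \<Rightarrow> real"
  shows "(\<Sum>b\<in>UNIV. f b) = f a + (\<Sum>b\<in>UNIV. if b \<noteq> a then f b else 0)"
proof -
  have "(\<Sum>b\<in>UNIV. f b) = (\<Sum>b\<in>UNIV. (if b = a then f b else 0) + (if b \<noteq> a then f b else 0))"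
    by (rule sum.cong) auto
  also have "\<dots> = f a + (\<Sum>b\<in>UNIV. if b \<noteq> a then f b else 0)"
    by (simp only: sum.distrib) simp
  finally show ?thesis .
qed

lemma cs_piece:
  fixes ip :: "'v \<Rightarrow> 'v \<Rightarrow> real" and x y z :: 'v
  assumes pos: "\<And>x y z t. 0 \<le> ip x x + ip y y + t\<^sup>2*ip z z - 2*ip x y - 2*t*ip x z + 2*t*ip y z"
  shows "\<bar>ip x z - ip y z\<bar> \<le> sqrt ((ip x x + ip y y - 2*ip x y) * ip z z)"
proof -
  have "(ip x z - ip y z)\<^sup>2 \<le> (ip x x + ip y y - 2*ip x y) * ip z z"
  proof (rule quad_cs)
    fix t :: real
    show "0 \<le> ip x x + ip y y - 2 * ip x y - 2 * t * (ip x z - ip y z) + t\<^sup>2 * ip z z"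
      using pos[where x=x and y=y and z=z and t=t] by (simp add: algebra_simps)
  qed
  then have "sqrt ((ip x z - ip y z)\<^sup>2) \<le> sqrt ((ip x x + ip y y - 2*ip x y) * ip z z)"
    by (rule real_sqrt_le_mono)
  then show ?thesis by simp
qed

lemma key_bound:
  fixes ip :: "'v \<Rightarrow> 'v \<Rightarrow> real" and h k :: "'i \<Rightarrow> 'o::finite \<Rightarrow> 'v"
    and p :: "'o \<Rightarrow> 'o \<Rightarrow> 'i \<Rightarrow> 'i \<Rightarrow> real"
  assumes sym: "\<And>x y. ip x y = ip y x"
    and pos: "\<And>x y z t. 0 \<le> ip x x + ip y y + t\<^sup>2*ip z z - 2*ip x y - 2*t*ip x z + 2*t*ip y z"
    and h1: "\<And>v a. ip (h v a) eta = (\<Sum>b\<in>UNIV. ip (h v a) (k v b))"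
    and h2: "\<And>v b. ip eta (k v b) = (\<Sum>a\<in>UNIV. ip (h v a) (k v b))"
    and h3: "\<And>v a. ip (h v a) (h v a) = ip (h v a) eta"
    and h4: "\<And>v b. ip (k v b) (k v b) = ip eta (k v b)"
    and hp: "\<And>a b v w. p a b v w = ip (h v a) (k w b)"
  shows "sbound p a b v w"
proof -
  have E: "ip (h v a) (h v a) + ip (k v a) (k v a) - 2 * ip (h v a) (k v a) = eoff p v a" for v a
  proof -
    have s1: "(\<Sum>b\<in>UNIV. p a b v v) = p a a v v + (\<Sum>b\<in>UNIV. if b \<noteq> a then p a b v v else 0)"
      by (rule sum_off)
    have s2: "(\<Sum>a'\<in>UNIV. p a' a v v) = p a a v v + (\<Sum>a'\<in>UNIV. if a' \<noteq> a then p a' a v v else 0)"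
      by (rule sum_off)
    show ?thesis using s1 s2 unfolding eoff_def h3 h4 h1 h2 hp by simp
  qed
  have Z: "ip (k w b) (k w b) = zmar p w b" for w b
    unfolding h4 h2 zmar_def hp ..
  have c1: "\<bar>ip (h v a) (k w b) - ip (k v a) (k w b)\<bar> \<le> sqrt (eoff p v a * zmar p w b)"
    using cs_piece[where ip=ip and x="h v a" and y="k v a" and z="k w b", OF pos] E Z by simp
  have c2: "\<bar>ip (h w b) (k v a) - ip (k w b) (k v a)\<bar> \<le> sqrt (eoff p w b * zmar p v a)"
    using cs_piece[where ip=ip and x="h w b" and y="k w b" and z="k v a", OF pos] E Z by simp
  have "p a b v w - p b a w v = (ip (h v a) (k w b) - ip (k v a) (k w b)) - (ip (h w b) (k v a) - ip (k w b) (k v a))"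
    unfolding hp using sym[of "k v a" "k w b"] by simp
  then show ?thesis unfolding sbound_def using c1 c2 by linarith
qed

lemma sbound_perfect:
  assumes sb: "sbound p a b v w" and sync: "synchronous_game lam" and pf: "perfect lam p"
  shows "p a b v w = p b a w v"
proof -
  have z: "x \<noteq> y \<Longrightarrow> p x y v' v' = 0" for x y v'
    using sync pf unfolding synchronous_game_def perfect_def by auto
  have "eoff p v' a' = 0" for v' a'
  proof -
    have "\<And>b. (if b \<noteq> a' then p a' b v' v' else 0) = 0" "\<And>b. (if b \<noteq> a' then p b a' v' v' else 0) = 0"
      using z by auto
    then show ?thesis unfolding eoff_def by simp
  qed
  then show ?thesis using sb unfolding sbound_def by simp
qed

lemma inner_pos3:
  fixes x y z :: "'h::real_inner"
  shows "0 \<le> inner x x + inner y y + t\<^sup>2*inner z z - 2*inner x y - 2*t*inner x z + 2*t*inner y z"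
  using inner_ge_zero[of "x - y - t *\<^sub>R z"]
  by (simp add: inner_diff_left inner_diff_right inner_commute algebra_simps power2_eq_square)

lemma Re_cinner: "Re (cinner J x y) = inner x y"
  by (simp add: cinner_def)

lemma sum_only:
  fixes f :: "'o::finite \<Rightarrow> real"
  assumes "\<And>b. b \<noteq> a \<Longrightarrow> f b = 0"
  shows "(\<Sum>b\<in>UNIV. f b) = f a"
proof -
  have "(\<Sum>b\<in>UNIV. if b \<noteq> a then f b else 0) = 0"
    by (rule sum.neutral) (use assms in auto)
  then show ?thesis using sum_off[of f a] by simp
qed

lemma vect_sbound:
  assumes "vect_strategy (TYPE('h::{real_inner,complete_space})) p"
  shows "sbound p a b v w"
proof -
  obtain J :: "'h \<Rightarrow> 'h" and h k eta where
    "complex_structure J" "norm eta = 1" and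
    orth1: "\<forall>v a a'. a \<noteq> a' \<longrightarrow> cinner J (h v a) (h v a') = 0" and
    orth2: "\<forall>w b b'. b \<noteq> b' \<longrightarrow> cinner J (k w b) (k w b') = 0" and
    s1: "\<forall>v. (\<Sum>a\<in>UNIV. h v a) = eta" and s2: "\<forall>w. (\<Sum>b\<in>UNIV. k w b) = eta" and
    "\<forall>v w a b. Im (cinner J (h v a) (k w b)) = 0 \<and> Re (cinner J (h v a) (k w b)) \<ge> 0" and
    pp: "\<forall>a b v w. complex_of_real (p a b v w) = cinner J (h v a) (k w b)"
    using assms unfolding vect_strategy_def by (elim exE conjE) (rule that; assumption)
  have o1: "a \<noteq> a' \<Longrightarrow> inner (h v a) (h v a') = 0" for v a a'
    using orth1 Re_cinner[of J "h v a" "h v a'"] by auto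
  have o2: "b \<noteq> b' \<Longrightarrow> inner (k w b) (k w b') = 0" for w b b'
    using orth2 Re_cinner[of J "k w b" "k w b'"] by auto
  show ?thesis
  proof (rule key_bound[where ip=inner and h=h and k=k and eta=eta])
    show "inner x y = inner y x" for x y :: 'h by (rule inner_commute)
    show "0 \<le> inner x x + inner y y + t\<^sup>2*inner z z - 2*inner x y - 2*t*inner x z + 2*t*inner y z" for x y z :: 'h and t
      by (rule inner_pos3)
    show "inner (h v a) eta = (\<Sum>b\<in>UNIV. inner (h v a) (k v b))" for v a
      unfolding s2[rule_format, of v, symmetric] by (rule inner_sum_right)
    show "inner eta (k v b) = (\<Sum>a\<in>UNIV. inner (h v a) (k v b))" for v b
      unfolding s1[rule_format, of v, symmetric] by (rule inner_sum_left)
    show "inner (h v a) (h v a) = inner (h v a) eta" for v a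
    proof -
      have "inner (h v a) eta = (\<Sum>a'\<in>UNIV. inner (h v a) (h v a'))"
        unfolding s1[rule_format, of v, symmetric] by (rule inner_sum_right)
      also have "\<dots> = inner (h v a) (h v a)"
        by (rule sum_only) (use o1 in auto)
      finally show ?thesis by simp
    qed
    show "inner (k v b) (k v b) = inner eta (k v b)" for v b
    proof -
      have "inner eta (k v b) = (\<Sum>b'\<in>UNIV. inner (k v b') (k v b))"
        unfolding s2[rule_format, of v, symmetric] by (rule inner_sum_left)
      also have "\<dots> = inner (k v b) (k v b)"
        by (rule sum_only) (use o2 in auto)
      finally show ?thesis by simp
    qed
    show "p a b v w = inner (h v a) (k w b)" for a b v w
      using arg_cong[OF pp[rule_format, of a b v w], of Re] Re_cinner by simp
  qed
qed

lemma qc_sbound: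
  assumes "qc_strategy (TYPE('h::{real_inner,complete_space})) p"
  shows "sbound p a b v w"
proof -
  obtain J :: "'h \<Rightarrow> 'h" and E F psi where
    "complex_structure J" "norm psi = 1" and pE: "\<forall>v. is_pvm J (E v)" and pF: "\<forall>w. is_pvm J (F w)" and
    "\<forall>v w a b. E v a \<circ> F w b = F w b \<circ> E v a" and
    pp: "\<forall>a b v w. complex_of_real (p a b v w) = cinner J (E v a (F w b psi)) psi"
    using assms unfolding qc_strategy_def by (elim exE conjE) (rule that; assumption)
  have saE: "inner (E v a x) y = inner x (E v a y)" for v a x y
    using pE unfolding is_pvm_def is_projection_def by blast
  have saF: "inner (F v a x) y = inner x (F v a y)" for v a x y
    using pF unfolding is_pvm_def is_projection_def by blast
  have idE: "E v a (E v a x) = E v a x" for v a x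
    using pE unfolding is_pvm_def is_projection_def by blast
  have idF: "F v a (F v a x) = F v a x" for v a x
    using pF unfolding is_pvm_def is_projection_def by blast
  have sE: "(\<Sum>a\<in>UNIV. E v a x) = x" for v x
    using pE unfolding is_pvm_def by blast
  have sF: "(\<Sum>a\<in>UNIV. F v a x) = x" for v x
    using pF unfolding is_pvm_def by blast
  show ?thesis
  proof (rule key_bound[where ip=inner and h="\<lambda>v a. E v a psi" and k="\<lambda>v a. F v a psi" and eta=psi])
    show "inner x y = inner y x" for x y :: 'h by (rule inner_commute)
    show "0 \<le> inner x x + inner y y + t\<^sup>2*inner z z - 2*inner x y - 2*t*inner x z + 2*t*inner y z" for x y z :: 'h and t
      by (rule inner_pos3)
    show "inner (E v a psi) psi = (\<Sum>b\<in>UNIV. inner (E v a psi) (F v b psi))" for v a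
      by (simp add: inner_sum_right[symmetric] sF)
    show "inner psi (F v b psi) = (\<Sum>a\<in>UNIV. inner (E v a psi) (F v b psi))" for v b
      by (simp add: inner_sum_left[symmetric] sE)
    show "inner (E v a psi) (E v a psi) = inner (E v a psi) psi" for v a
      using saE[of v a "E v a psi" psi] idE by simp
    show "inner (F v b psi) (F v b psi) = inner psi (F v b psi)" for v b
      using saF[of v b psi "F v b psi"] idF by simp
    show "p a b v w = inner (E v a psi) (F w b psi)" for a b v w
    proof -
      have "p a b v w = Re (cinner J (E v a (F w b psi)) psi)"
        using arg_cong[OF pp[rule_format, of a b v w], of Re] by simp
      also have "\<dots> = inner (F w b psi) (E v a psi)" by (simp add: Re_cinner saE)
      finally show ?thesis by (simp add: inner_commute)
    qed
  qed
qed


definition cip :: "nat \<Rightarrow> nat \<Rightarrow> (nat \<times> nat \<Rightarrow> complex) \<Rightarrow> (nat \<times> nat \<Rightarrow> complex) \<Rightarrow> complex" where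
  "cip n m x y = (\<Sum>i<n. \<Sum>j<m. x (i,j) * cnj (y (i,j)))"

definition actA :: "nat \<Rightarrow> (nat \<Rightarrow> nat \<Rightarrow> complex) \<Rightarrow> (nat \<times> nat \<Rightarrow> complex) \<Rightarrow> (nat \<times> nat \<Rightarrow> complex)" where
  "actA n A x = (\<lambda>(i,j). \<Sum>i'<n. A i i' * x (i',j))"

definition actB :: "nat \<Rightarrow> (nat \<Rightarrow> nat \<Rightarrow> complex) \<Rightarrow> (nat \<times> nat \<Rightarrow> complex) \<Rightarrow> (nat \<times> nat \<Rightarrow> complex)" where
  "actB m B x = (\<lambda>(i,j). \<Sum>j'<m. B j j' * x (i,j'))"

lemma cip_cong:
  assumes "\<And>i j. i < n \<Longrightarrow> j < m \<Longrightarrow> x (i,j) = x' (i,j)"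
      and "\<And>i j. i < n \<Longrightarrow> j < m \<Longrightarrow> y (i,j) = y' (i,j)"
  shows "cip n m x y = cip n m x' y'"
  unfolding cip_def using assms by (intro sum.cong refl) auto

lemma cip_sum_right:
  "cip n m x (\<lambda>ij. \<Sum>b\<in>S. y b ij) = (\<Sum>b\<in>S. cip n m x (y b))"
  unfolding cip_def
  by (simp add: cnj_sum sum_distrib_left sum.swap[of _ S])

lemma cip_sum_left:
  "cip n m (\<lambda>ij. \<Sum>b\<in>S. y b ij) x = (\<Sum>b\<in>S. cip n m (y b) x)"
  unfolding cip_def
  by (simp add: sum_distrib_right sum.swap[of _ S])

lemma cip_cnj: "cip n m y x = cnj (cip n m x y)"
  unfolding cip_def by (simp add: cnj_sum mult.commute)

lemma cip_adjA:
  assumes sa: "\<And>i j. i < n \<Longrightarrow> j < n \<Longrightarrow> cnj (A j i) = A i j"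
  shows "cip n m (actA n A x) y = cip n m x (actA n A y)"
proof -
  have "cip n m (actA n A x) y = (\<Sum>i<n. \<Sum>j<m. \<Sum>i'<n. A i i' * x (i',j) * cnj (y (i,j)))"
    unfolding cip_def actA_def by (simp add: sum_distrib_right)
  also have "\<dots> = (\<Sum>i<n. \<Sum>i'<n. \<Sum>j<m. A i i' * x (i',j) * cnj (y (i,j)))"
    by (simp add: sum.swap[of _ "{..<m}"])
  also have "\<dots> = (\<Sum>i'<n. \<Sum>i<n. \<Sum>j<m. A i i' * x (i',j) * cnj (y (i,j)))"
    by (rule sum.swap)
  also have "\<dots> = (\<Sum>i'<n. \<Sum>j<m. \<Sum>i<n. A i i' * x (i',j) * cnj (y (i,j)))"
    by (simp add: sum.swap[of _ "{..<m}"])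
  also have "\<dots> = (\<Sum>i'<n. \<Sum>j<m. \<Sum>i<n. x (i',j) * (cnj (A i' i) * cnj (y (i,j))))"
    by (intro sum.cong refl) (simp add: sa)
  also have "\<dots> = cip n m x (actA n A y)"
    unfolding cip_def actA_def by (simp add: cnj_sum sum_distrib_left)
  finally show ?thesis .
qed

lemma cip_adjB:
  assumes sa: "\<And>i j. i < m \<Longrightarrow> j < m \<Longrightarrow> cnj (B j i) = B i j"
  shows "cip n m (actB m B x) y = cip n m x (actB m B y)"
proof -
  have "cip n m (actB m B x) y = (\<Sum>i<n. \<Sum>j<m. \<Sum>j'<m. B j j' * x (i,j') * cnj (y (i,j)))"
    unfolding cip_def actB_def by (simp add: sum_distrib_right)
  also have "\<dots> = (\<Sum>i<n. \<Sum>j'<m. \<Sum>j<m. B j j' * x (i,j') * cnj (y (i,j)))"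
    by (rule sum.cong[OF refl], rule sum.swap)
  also have "\<dots> = (\<Sum>i<n. \<Sum>j'<m. \<Sum>j<m. x (i,j') * (cnj (B j' j) * cnj (y (i,j))))"
    by (intro sum.cong refl) (simp add: sa)
  also have "\<dots> = cip n m x (actB m B y)"
    unfolding cip_def actB_def by (simp add: cnj_sum sum_distrib_left)
  finally show ?thesis .
qed

lemma actA_idem:
  assumes P: "mat_projection n A" and i: "i < n"
  shows "actA n A (actA n A x) (i,j) = actA n A x (i,j)"
proof -
  have "actA n A (actA n A x) (i,j) = (\<Sum>i'<n. \<Sum>i''<n. A i i' * A i' i'' * x (i'',j))"
    unfolding actA_def by (simp add: sum_distrib_left mult.assoc)
  also have "\<dots> = (\<Sum>i''<n. (\<Sum>i'<n. A i i' * A i' i'') * x (i'',j))"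
    by (subst sum.swap) (simp add: sum_distrib_right)
  also have "\<dots> = actA n A x (i,j)"
    unfolding actA_def using P i unfolding mat_projection_def by (auto intro!: sum.cong)
  finally show ?thesis .
qed

lemma actB_idem:
  assumes P: "mat_projection m B" and j: "j < m"
  shows "actB m B (actB m B x) (i,j) = actB m B x (i,j)"
proof -
  have "actB m B (actB m B x) (i,j) = (\<Sum>i'<m. \<Sum>i''<m. B j i' * B i' i'' * x (i,i''))"
    unfolding actB_def by (simp add: sum_distrib_left mult.assoc)
  also have "\<dots> = (\<Sum>i''<m. (\<Sum>i'<m. B j i' * B i' i'') * x (i,i''))"
    by (subst sum.swap) (simp add: sum_distrib_right)
  also have "\<dots> = actB m B x (i,j)"
    unfolding actB_def using P j unfolding mat_projection_def by (auto intro!: sum.cong)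
  finally show ?thesis .
qed

lemma actA_sum:
  assumes P: "mat_pvm n E" and i: "i < n"
  shows "(\<Sum>a\<in>UNIV. actA n (E a) x (i,j)) = x (i,j)"
proof -
  have "(\<Sum>a\<in>UNIV. actA n (E a) x (i,j)) = (\<Sum>i'<n. (\<Sum>a\<in>UNIV. E a i i') * x (i',j))"
    unfolding actA_def by (simp add: sum_distrib_right sum.swap[of _ UNIV])
  also have "\<dots> = (\<Sum>i'<n. (if i = i' then x (i',j) else 0))"
    using P i unfolding mat_pvm_def by (intro sum.cong refl) auto
  also have "\<dots> = x (i,j)" using i by (simp add: sum.delta)
  finally show ?thesis .
qed

lemma actB_sum:
  assumes P: "mat_pvm m E" and j: "j < m"
  shows "(\<Sum>a\<in>UNIV. actB m (E a) x (i,j)) = x (i,j)"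
proof -
  have "(\<Sum>a\<in>UNIV. actB m (E a) x (i,j)) = (\<Sum>i'<m. (\<Sum>a\<in>UNIV. E a j i') * x (i,i'))"
    unfolding actB_def by (simp add: sum_distrib_right sum.swap[of _ UNIV])
  also have "\<dots> = (\<Sum>i'<m. (if j = i' then x (i,i') else 0))"
    using P j unfolding mat_pvm_def by (intro sum.cong refl) auto
  also have "\<dots> = x (i,j)" using j by (simp add: sum.delta)
  finally show ?thesis .
qed

lemma tensor_expect_cip:
  "tensor_expect n m A B psi = cip n m (actA n A (actB m B psi)) psi"
  unfolding tensor_expect_def cip_def actA_def actB_def
  by (simp add: sum_distrib_left mult.assoc)

lemma pointwise_pos:
  fixes a b c :: complex and t :: real
  shows "Re (a * cnj a) + Re (b * cnj b) + t\<^sup>2 * Re (c * cnj c) - 2 * Re (a * cnj b) - 2 * t * Re (a * cnj c) + 2 * t * Re (b * cnj c)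
    = (cmod (a - b - of_real t * c))\<^sup>2"
  unfolding cmod_power2 by (simp add: algebra_simps power2_eq_square)

lemma cip_pos:
  "0 \<le> Re (cip n m x x) + Re (cip n m y y) + t\<^sup>2 * Re (cip n m z z) - 2 * Re (cip n m x y) - 2 * t * Re (cip n m x z) + 2 * t * Re (cip n m y z)"
proof -
  have "Re (cip n m x x) + Re (cip n m y y) + t\<^sup>2 * Re (cip n m z z) - 2 * Re (cip n m x y) - 2 * t * Re (cip n m x z) + 2 * t * Re (cip n m y z)
     = (\<Sum>i<n. \<Sum>j<m. Re (x (i,j) * cnj (x (i,j))) + Re (y (i,j) * cnj (y (i,j))) + t\<^sup>2 * Re (z (i,j) * cnj (z (i,j)))
         - 2 * Re (x (i,j) * cnj (y (i,j))) - 2 * t * Re (x (i,j) * cnj (z (i,j))) + 2 * t * Re (y (i,j) * cnj (z (i,j))))"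
    unfolding cip_def by (simp add: Re_sum sum.distrib sum_subtractf sum_distrib_left ring_distribs)
  also have "\<dots> = (\<Sum>i<n. \<Sum>j<m. (cmod (x (i,j) - y (i,j) - of_real t * z (i,j)))\<^sup>2)"
    by (simp only: pointwise_pos)
  also have "\<dots> \<ge> 0" by (intro sum_nonneg) auto
  finally show ?thesis by simp
qed

lemma Re_cip_sym: "Re (cip n m y x) = Re (cip n m x y)"
  by (simp add: cip_cnj[of n m y x])

lemma q_sbound:
  assumes "q_strategy p"
  shows "sbound p a b v w"
proof -
  obtain n m E F psi where
    "(\<Sum>i<n. \<Sum>j<m. (cmod (psi (i, j)))\<^sup>2) = 1" and
    pE: "\<forall>v. mat_pvm n (E v)" and pF: "\<forall>w. mat_pvm m (F w)" and
    pp: "\<forall>a b v w. complex_of_real (p a b v w) = tensor_expect n m (E v a) (F w b) psi"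
    using assms unfolding q_strategy_def by (elim exE conjE) (rule that; assumption)
  have saE: "\<And>i j. i < n \<Longrightarrow> j < n \<Longrightarrow> cnj (E v a j i) = E v a i j" for v a
    using pE unfolding mat_pvm_def mat_projection_def by blast
  have saF: "\<And>i j. i < m \<Longrightarrow> j < m \<Longrightarrow> cnj (F v a j i) = F v a i j" for v a
    using pF unfolding mat_pvm_def mat_projection_def by blast
  have prE: "mat_projection n (E v a)" for v a using pE unfolding mat_pvm_def by blast
  have prF: "mat_projection m (F v a)" for v a using pF unfolding mat_pvm_def by blast
  show ?thesis
  proof (rule key_bound[where ip="\<lambda>x y. Re (cip n m x y)" and h="\<lambda>v a. actA n (E v a) psi"
        and k="\<lambda>v a. actB m (F v a) psi" and eta=psi])
    show "Re (cip n m x y) = Re (cip n m y x)" for x y by (rule Re_cip_sym[symmetric])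
    show "0 \<le> Re (cip n m x x) + Re (cip n m y y) + t\<^sup>2 * Re (cip n m z z) - 2 * Re (cip n m x y) - 2 * t * Re (cip n m x z) + 2 * t * Re (cip n m y z)" for x y z t
      by (rule cip_pos)
    show "Re (cip n m (actA n (E v a) psi) psi) = (\<Sum>b\<in>UNIV. Re (cip n m (actA n (E v a) psi) (actB m (F v b) psi)))" for v a
    proof -
      have "cip n m (actA n (E v a) psi) psi = cip n m (actA n (E v a) psi) (\<lambda>ij. \<Sum>b\<in>UNIV. actB m (F v b) psi ij)"
        by (rule cip_cong) (simp_all add: actB_sum pF)
      then show ?thesis by (simp add: cip_sum_right Re_sum)
    qed
    show "Re (cip n m psi (actB m (F v b) psi)) = (\<Sum>a\<in>UNIV. Re (cip n m (actA n (E v a) psi) (actB m (F v b) psi)))" for v b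
    proof -
      have "cip n m psi (actB m (F v b) psi) = cip n m (\<lambda>ij. \<Sum>a\<in>UNIV. actA n (E v a) psi ij) (actB m (F v b) psi)"
        by (rule cip_cong) (simp_all add: actA_sum pE)
      then show ?thesis by (simp add: cip_sum_left Re_sum)
    qed
    show "Re (cip n m (actA n (E v a) psi) (actA n (E v a) psi)) = Re (cip n m (actA n (E v a) psi) psi)" for v a
    proof -
      have "cip n m (actA n (E v a) psi) (actA n (E v a) psi) = cip n m psi (actA n (E v a) (actA n (E v a) psi))"
        by (rule cip_adjA) (rule saE)
      also have "\<dots> = cip n m psi (actA n (E v a) psi)"
        by (rule cip_cong) (simp_all add: actA_idem prE)
      finally show ?thesis using Re_cip_sym by metis
    qed
    show "Re (cip n m (actB m (F v b) psi) (actB m (F v b) psi)) = Re (cip n m psi (actB m (F v b) psi))" for v b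
    proof -
      have "cip n m (actB m (F v b) psi) (actB m (F v b) psi) = cip n m (actB m (F v b) (actB m (F v b) psi)) psi"
        by (rule cip_adjB[symmetric]) (rule saF)
      also have "\<dots> = cip n m (actB m (F v b) psi) psi"
        by (rule cip_cong) (simp_all add: actB_idem prF)
      finally show ?thesis using Re_cip_sym by metis
    qed
    show "p a b v w = Re (cip n m (actA n (E v a) psi) (actB m (F w b) psi))" for a b v w
    proof -
      have "p a b v w = Re (tensor_expect n m (E v a) (F w b) psi)"
        using arg_cong[OF pp[rule_format, of a b v w], of Re] by simp
      also have "\<dots> = Re (cip n m (actB m (F w b) psi) (actA n (E v a) psi))"
        unfolding tensor_expect_cip by (subst cip_adjA) (rule saE, assumption+, rule refl)
      finally show ?thesis using Re_cip_sym by metis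
    qed
  qed
qed

lemma cont_eval:
  "continuous_on UNIV (\<lambda>f::'o\<Rightarrow>'o\<Rightarrow>'i\<Rightarrow>'i\<Rightarrow>real. f a b v w)"
proof -
  have c1: "continuous_on UNIV (\<lambda>f::'o\<Rightarrow>'o\<Rightarrow>'i\<Rightarrow>'i\<Rightarrow>real. f a)" by simp
  have c2: "continuous_on UNIV (\<lambda>f::'o\<Rightarrow>'o\<Rightarrow>'i\<Rightarrow>'i\<Rightarrow>real. f a b)"
    by (rule continuous_on_product_then_coordinatewise[OF c1])
  have c3: "continuous_on UNIV (\<lambda>f::'o\<Rightarrow>'o\<Rightarrow>'i\<Rightarrow>'i\<Rightarrow>real. f a b v)"
    by (rule continuous_on_product_then_coordinatewise[OF c2])
  show ?thesis
    by (rule continuous_on_product_then_coordinatewise[OF c3])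
qed

lemma cont_if_eval:
  "continuous_on UNIV (\<lambda>f::'o\<Rightarrow>'o\<Rightarrow>'i\<Rightarrow>'i\<Rightarrow>real. if P then f a b v w else 0)"
  by (cases P) (simp_all add: cont_eval)

lemma cont_eoff: "continuous_on UNIV (\<lambda>f::'o::finite\<Rightarrow>'o\<Rightarrow>'i\<Rightarrow>'i\<Rightarrow>real. eoff f v a)"
  unfolding eoff_def by (intro continuous_on_add continuous_on_sum cont_if_eval)

lemma cont_zmar: "continuous_on UNIV (\<lambda>f::'o::finite\<Rightarrow>'o\<Rightarrow>'i\<Rightarrow>'i\<Rightarrow>real. zmar f v a)"
  unfolding zmar_def by (intro continuous_on_sum cont_eval)

lemma closed_sbound: "closed {f::'o::finite\<Rightarrow>'o\<Rightarrow>'i\<Rightarrow>'i\<Rightarrow>real. sbound f a b v w}"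
  unfolding sbound_def
  by (intro closed_Collect_le continuous_on_rabs continuous_on_diff continuous_on_add
      continuous_on_real_sqrt continuous_on_mult cont_eval cont_eoff cont_zmar)

lemma qa_sbound:
  assumes "qa_strategy p"
  shows "sbound p a b v w"
proof -
  have "{p'. q_strategy p'} \<subseteq> {f. sbound f a b v w}" using q_sbound by blast
  then have "closure {p'. q_strategy p'} \<subseteq> {f. sbound f a b v w}"
    by (rule closure_minimal) (rule closed_sbound)
  then show ?thesis using assms unfolding qa_strategy_def by blast
qed

lemma loc_sym:
  assumes "loc_strategy (TYPE('m)) (p :: 'o::finite \<Rightarrow> 'o \<Rightarrow> 'i::finite \<Rightarrow> 'i \<Rightarrow> real)"
    and sync: "synchronous_game lam" and pf: "perfect lam p"
  shows "p a b v w = p b a w v"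
proof -
  obtain M :: "'m measure" and f g :: "'i \<Rightarrow> 'm \<Rightarrow> 'o" where
    M: "prob_space M" and mf: "\<forall>v. f v \<in> measurable M (count_space UNIV)" and
    mg: "\<forall>w. g w \<in> measurable M (count_space UNIV)" and
    pp: "\<forall>a b v w. p a b v w = measure M {x \<in> space M. f v x = a \<and> g w x = b}"
    using assms(1) unfolding loc_strategy_def by (elim exE conjE) (rule that; assumption)
  interpret prob_space M by (rule M)
  have mf': "f v \<in> measurable M (count_space UNIV)" for v using mf by blast
  have mg': "g v \<in> measurable M (count_space UNIV)" for v using mg by blast
  have sets: "{x \<in> space M. f v x = a \<and> g w x = b} \<in> sets M" for v w a b
    using mf' mg' by measurable
  have z: "x \<noteq> y \<Longrightarrow> p x y v' v' = 0" for x y v'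
    using sync pf unfolding synchronous_game_def perfect_def by auto
  have ae1: "AE x in M. \<not> (f v x = a' \<and> g v x = b')" if "a' \<noteq> b'" for v a' b'
  proof -
    have "emeasure M {x \<in> space M. f v x = a' \<and> g v x = b'} = 0"
      using z[OF that, of v] pp sets by (simp add: emeasure_eq_measure)
    then show ?thesis using sets[of v a' v b'] by (subst AE_iff_measurable) auto
  qed
  have "AE x in M. \<forall>v\<in>UNIV. \<forall>a'\<in>UNIV. \<forall>b'\<in>UNIV. a' \<noteq> b' \<longrightarrow> \<not> (f v x = a' \<and> g v x = b')"
  proof (intro AE_finite_allI finite_UNIV)
    fix v a' b' :: _
    show "AE x in M. a' \<noteq> b' \<longrightarrow> \<not> (f v x = a' \<and> g v x = b')"
      using ae1[of a' b' v] by (cases "a' = b'") auto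
  qed simp_all
  then have ae: "AE x in M. \<forall>v. f v x = g v x"
    by eventually_elim auto
  have "measure M {x \<in> space M. f v x = a \<and> g w x = b} = measure M {x \<in> space M. f w x = b \<and> g v x = a}"
    by (rule measure_eq_AE) (use ae sets in \<open>auto elim!: AE_mp\<close>)
  then show ?thesis using pp by simp
qed

lemma strat_sym:
  fixes lam :: "'i::finite \<Rightarrow> 'i \<Rightarrow> 'o::finite \<Rightarrow> 'o \<Rightarrow> bool"
    and p :: "'o \<Rightarrow> 'o \<Rightarrow> 'i \<Rightarrow> 'i \<Rightarrow> real"
  assumes sync: "synchronous_game lam"
    and ts: "t_strategy TYPE('m) TYPE('h::{real_inner,complete_space}) t p" and pf: "perfect lam p"
  shows "p a b v w = p b a w v"
proof (cases t)
  case Loc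
  then show ?thesis using ts loc_sym[OF _ sync pf] unfolding t_strategy_def by auto
next
  case Q
  show ?thesis
    by (intro sbound_perfect[OF _ sync pf] q_sbound) (use ts Q in \<open>simp add: t_strategy_def\<close>)
next
  case QA
  show ?thesis
    by (intro sbound_perfect[OF _ sync pf] qa_sbound) (use ts QA in \<open>simp add: t_strategy_def\<close>)
next
  case QC
  show ?thesis
    by (intro sbound_perfect[OF _ sync pf] qc_sbound) (use ts QC in \<open>simp add: t_strategy_def\<close>)
next
  case Vect
  show ?thesis
    by (intro sbound_perfect[OF _ sync pf] vect_sbound) (use ts Vect in \<open>simp add: t_strategy_def\<close>)
qed

theorem mainTheorem10:
  fixes lam :: "'i::finite \<Rightarrow> 'i \<Rightarrow> 'o::finite \<Rightarrow> 'o \<Rightarrow> bool"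
    and p :: "'o \<Rightarrow> 'o \<Rightarrow> 'i \<Rightarrow> 'i \<Rightarrow> real"
    and t :: strat_class
  assumes "synchronous_game lam"
  shows "(t_strategy TYPE('m) TYPE('h::{real_inner,complete_space}) t p \<and> perfect lam p)
     \<longleftrightarrow> (t_strategy TYPE('m) TYPE('h) t p \<and> perfect (sym_rule lam) p)"
proof
  assume A: "t_strategy TYPE('m) TYPE('h) t p \<and> perfect lam p"
  have "perfect (sym_rule lam) p"
    unfolding perfect_def sym_rule_def
  proof (intro allI impI)
    fix v w a b
    assume "\<not> (lam v w a b \<and> lam w v b a)"
    then consider "\<not> lam v w a b" | "\<not> lam w v b a" by blast
    then show "p a b v w = 0"
    proof cases
      case 1 then show ?thesis using A unfolding perfect_def by blast
    next
      case 2
      then have "p b a w v = 0" using A unfolding perfect_def by blast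
      moreover have "p a b v w = p b a w v"
        using strat_sym[OF assms] A by blast
      ultimately show ?thesis by simp
    qed
  qed
  then show "t_strategy TYPE('m) TYPE('h) t p \<and> perfect (sym_rule lam) p" using A by blast
next
  assume "t_strategy TYPE('m) TYPE('h) t p \<and> perfect (sym_rule lam) p"
  then show "t_strategy TYPE('m) TYPE('h) t p \<and> perfect lam p"
    unfolding perfect_def sym_rule_def by blast
qed

end
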